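(* Let $0\le\theta\le\frac{\pi}{2}$. For each positive integer $N$, let $A_N(\theta)$ be the $N\times N$ matrix with entries $\frac{\cos((m-n)\theta)}{m-n}$ for $m\neq n$ and $0$ on the diagonal, and let $B_N(\theta)$ be the $N\times N$ matrix with entries $\frac{\sin((m-n)\theta)}{m-n}$ for $m\neq n$ and $\theta$ on the diagonal ($m,n=1,\dots,N$). Then \begin{enumerate} \item[(1)] $\displaystyle\lim_{N\to\infty} \frac{\operatorname{trace}(A_N(\theta)^2)}{N} = -\left(\frac{\pi^2}{3}+\theta^2-\pi\theta\right)$; \item[(2)] $\displaystyle\lim_{N\to\infty} \frac{\operatorname{trace}(B_N(\theta)^2)}{N} = \pi\theta$. \end{enumerate} *)

theory Defs
  imports "HOL-Analysis.Analysis"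
begin

definition A_entry :: "real \<Rightarrow> nat \<Rightarrow> nat \<Rightarrow> real" where
  "A_entry \<theta> m n = (if m = n then 0
     else cos ((real m - real n) * \<theta>) / (real m - real n))"

definition B_entry :: "real \<Rightarrow> nat \<Rightarrow> nat \<Rightarrow> real" where
  "B_entry \<theta> m n = (if m = n then \<theta>
     else sin ((real m - real n) * \<theta>) / (real m - real n))"

definition trace_sq :: "(nat \<Rightarrow> nat \<Rightarrow> real) \<Rightarrow> nat \<Rightarrow> real" where
  "trace_sq M N = (\<Sum>m\<in>{1..N}. \<Sum>n\<in>{1..N}. M m n * M n m)"

end

theory Submission
  imports Defs
begin

lemma dcos: "(a::real) \<noteq> 0 \<Longrightarrow> ((\<lambda>x. c * cos (a * x) / a\<^sup>2) has_field_derivative - (c * sin (a * x) / a)) (at x within S)"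
proof -
  assume a: "a \<noteq> 0"
  have "((\<lambda>x. c * cos (a * x) / a\<^sup>2) has_field_derivative (c * (- sin (a * x) * a)) / a\<^sup>2) (at x within S)"
    by (intro DERIV_cdivide DERIV_cmult) (auto intro!: derivative_eq_intros)
  moreover have "(c * (- sin (a * x) * a)) / a\<^sup>2 = - (c * sin (a * x) / a)"
    using a by (simp add: power2_eq_square)
  ultimately show ?thesis by simp
qed

lemma dsin: "(a::real) \<noteq> 0 \<Longrightarrow> ((\<lambda>x. c * sin (a * x) / a) has_field_derivative (c * cos (a * x))) (at x within S)"
proof -
  assume a: "a \<noteq> 0"
  have "((\<lambda>x. c * sin (a * x) / a) has_field_derivative c * (cos (a * x) * a) / a) (at x within S)"
    by (auto intro!: derivative_eq_intros)
  moreover have "c * (cos (a * x) * a) / a = c * cos (a * x)"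
    using a by (simp add: field_simps)
  ultimately show ?thesis by simp
qed

definition Cr :: "real \<Rightarrow> real \<Rightarrow> real" where
  "Cr r x = (\<Sum>k. r ^ Suc k * cos (real (Suc k) * x) / (real (Suc k))\<^sup>2)"
definition Sr :: "real \<Rightarrow> real \<Rightarrow> real" where
  "Sr r x = (\<Sum>k. r ^ Suc k * sin (real (Suc k) * x) / real (Suc k))"
definition cr :: "real \<Rightarrow> real \<Rightarrow> real" where
  "cr r x = (\<Sum>k. r ^ Suc k * cos (real (Suc k) * x))"

lemma summable_rpow: "0 \<le> r \<Longrightarrow> r < 1 \<Longrightarrow> summable (\<lambda>k. r ^ Suc k :: real)"
  by (simp add: summable_geometric)

lemma sinbound:
  assumes "0 \<le> (r::real)"
  shows "\<bar>r ^ Suc n * sin (real (Suc n) * x) / real (Suc n)\<bar> \<le> r ^ Suc n"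
proof -
  have "\<bar>sin (real (Suc n) * x)\<bar> \<le> real (Suc n)"
    using abs_sin_le_one[of "real (Suc n) * x"] by (rule order_trans) simp
  then have "\<bar>sin (real (Suc n) * x)\<bar> / real (Suc n) \<le> 1"
    by (simp add: divide_le_eq del: of_nat_Suc)
  then have "r ^ Suc n * (\<bar>sin (real (Suc n) * x)\<bar> / real (Suc n)) \<le> r ^ Suc n * 1"
    using assms by (intro mult_left_mono) auto
  then show ?thesis using assms by (simp add: abs_mult del: of_nat_Suc power_Suc)
qed

lemma summable_Sr: assumes r: "0 \<le> r" "r < 1"
  shows "summable (\<lambda>k. r ^ Suc k * sin (real (Suc k) * x) / real (Suc k))"
proof (rule summable_comparison_test'[OF summable_rpow[OF r]])
  fix n
  show "norm (r ^ Suc n * sin (real (Suc n) * x) / real (Suc n)) \<le> r ^ Suc n"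
    using sinbound[OF r(1)] by simp
qed

lemma Cr_deriv:
  assumes r: "0 \<le> r" "r < 1"
  shows "(Cr r has_field_derivative - Sr r x) (at x)"
proof -
  let ?f = "\<lambda>k x. r ^ Suc k * cos (real (Suc k) * x) / (real (Suc k))\<^sup>2"
  let ?f' = "\<lambda>k x. - (r ^ Suc k * sin (real (Suc k) * x) / real (Suc k))"
  have d: "\<And>n x. x \<in> UNIV \<Longrightarrow> (?f n has_field_derivative ?f' n x) (at x within UNIV)"
    by (rule dcos) simp
  have u: "uniformly_convergent_on UNIV (\<lambda>n x. \<Sum>i<n. ?f' i x)"
  proof (rule Weierstrass_m_test'[where M = "\<lambda>k. r ^ Suc k"])
    fix n x
    show "norm (?f' n x) \<le> r ^ Suc n"
      using sinbound[OF r(1)] by simp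
  qed (use summable_rpow[OF r] in auto)
  have s0: "summable (\<lambda>n. ?f n 0)"
  proof (rule summable_comparison_test'[OF summable_rpow[OF r]])
    fix n
    have "1 \<le> (real (Suc n))\<^sup>2" by simp
    then have "r ^ Suc n / (real (Suc n))\<^sup>2 \<le> r ^ Suc n" using r
      using frac_le[of "r ^ Suc n" "r ^ Suc n" 1 "(real (Suc n))\<^sup>2"] by simp
    then show "norm (?f n 0) \<le> r ^ Suc n" using r
      by (simp del: power_Suc of_nat_Suc)
  qed
  have "((\<lambda>x. \<Sum>n. ?f n x) has_field_derivative (\<Sum>n. ?f' n x)) (at x)"
    by (rule has_field_derivative_series'(2)[OF _ d u _ s0]) auto
  moreover have "(\<Sum>n. ?f' n x) = - Sr r x"
    unfolding Sr_def by (rule suminf_minus[OF summable_Sr[OF r]])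
  ultimately show ?thesis unfolding Cr_def[abs_def] by simp
qed

lemma Sr_deriv:
  assumes r: "0 \<le> r" "r < 1"
  shows "(Sr r has_field_derivative cr r x) (at x)"
proof -
  let ?f = "\<lambda>k x. r ^ Suc k * sin (real (Suc k) * x) / real (Suc k)"
  let ?f' = "\<lambda>k x. r ^ Suc k * cos (real (Suc k) * x)"
  have d: "\<And>n x. x \<in> UNIV \<Longrightarrow> (?f n has_field_derivative ?f' n x) (at x within UNIV)"
    by (rule dsin) simp
  have u: "uniformly_convergent_on UNIV (\<lambda>n x. \<Sum>i<n. ?f' i x)"
  proof (rule Weierstrass_m_test'[where M = "\<lambda>k. r ^ Suc k"])
    fix n x
    show "norm (?f' n x) \<le> r ^ Suc n" using r abs_cos_le_one[of "real (Suc n) * x"]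
      by (simp add: abs_mult mult_left_le del: power_Suc)
  qed (use summable_rpow[OF r] in auto)
  have "((\<lambda>x. \<Sum>n. ?f n x) has_field_derivative (\<Sum>n. ?f' n x)) (at x)"
    by (rule has_field_derivative_series'(2)[OF _ d u _ summable_Sr[OF r]]) auto
  then show ?thesis unfolding Sr_def[abs_def] cr_def by simp
qed

lemma trig_id: "(1 - r * cos x)\<^sup>2 + (r * sin x)\<^sup>2 = 1 - 2 * r * cos x + (r::real)\<^sup>2"
proof -
  have "(1 - r * cos x)\<^sup>2 + (r * sin x)\<^sup>2 = 1 - 2 * r * cos x + r\<^sup>2 * ((sin x)\<^sup>2 + (cos x)\<^sup>2)"
    by algebra
  then show ?thesis by simp
qed

lemma trig_id2: "r * cos x * (1 - r * cos x) - r * sin x * (- (r * - sin x)) = r * cos x - (r::real)\<^sup>2"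
proof -
  have "r * cos x * (1 - r * cos x) - r * sin x * (- (r * - sin x)) = r * cos x - r\<^sup>2 * ((sin x)\<^sup>2 + (cos x)\<^sup>2)"
    by algebra
  then show ?thesis by simp
qed

lemma cr_closed:
  assumes r: "0 \<le> r" "r < 1"
  shows "cr r x = (r * cos x - r\<^sup>2) / (1 - 2 * r * cos x + r\<^sup>2)"
proof -
  define z where "z = complex_of_real r * cis x"
  have nz: "norm z < 1" using r by (simp add: z_def norm_mult)
  have "(\<lambda>k. z ^ k) sums (1 / (1 - z))" by (rule geometric_sums[OF nz])
  then have "(\<lambda>k. z * z ^ k) sums (z * (1 / (1 - z)))" by (rule sums_mult)
  then have "(\<lambda>k. z ^ Suc k) sums (z / (1 - z))" by simp
  then have "(\<lambda>k. Re (z ^ Suc k)) sums Re (z / (1 - z))" by (rule sums_Re)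
  moreover have "\<And>k. Re (z ^ Suc k) = r ^ Suc k * cos (real (Suc k) * x)"
  proof -
    fix k
    have dm: "cis x ^ Suc k = cis (real (Suc k) * x)" by (rule Complex.DeMoivre)
    have "z ^ Suc k = complex_of_real r ^ Suc k * cis x ^ Suc k"
      unfolding z_def by (rule power_mult_distrib)
    also have "\<dots> = complex_of_real (r ^ Suc k) * cis (real (Suc k) * x)"
      by (simp only: dm of_real_power)
    finally have "z ^ Suc k = complex_of_real (r ^ Suc k) * cis (real (Suc k) * x)" .
    then show "Re (z ^ Suc k) = r ^ Suc k * cos (real (Suc k) * x)"
      by (simp only:) (simp del: power_Suc of_nat_Suc)
  qed
  ultimately have "(\<lambda>k. r ^ Suc k * cos (real (Suc k) * x)) sums Re (z / (1 - z))" by simp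
  then have "cr r x = Re (z / (1 - z))" unfolding cr_def by (simp add: sums_iff)
  also have "\<dots> = (r * cos x - r\<^sup>2) / (1 - 2 * r * cos x + r\<^sup>2)"
  proof -
    have "(1 - r * cos x)\<^sup>2 + (r * sin x)\<^sup>2 = 1 - 2 * r * cos x + r\<^sup>2"
      by (rule trig_id)
    then show ?thesis
      by (simp add: z_def Re_divide power2_eq_square algebra_simps)
  qed
  finally show ?thesis .
qed

definition Ar :: "real \<Rightarrow> real \<Rightarrow> real" where
  "Ar r x = arctan (r * sin x / (1 - r * cos x))"

lemma denom_pos: "0 \<le> r \<Longrightarrow> r < (1::real) \<Longrightarrow> 0 < 1 - r * cos x"
proof -
  assume r: "0 \<le> r" "r < 1"
  have "r * cos x \<le> r * 1" using r by (intro mult_left_mono) auto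
  then show ?thesis using r by simp
qed

lemma denom2_pos: "0 \<le> r \<Longrightarrow> r < (1::real) \<Longrightarrow> 0 < 1 - 2 * r * cos x + r\<^sup>2"
proof -
  assume r: "0 \<le> r" "r < 1"
  have "1 - 2 * r * cos x + r\<^sup>2 = (1 - r * cos x)\<^sup>2 + (r * sin x)\<^sup>2"
    by (rule trig_id[symmetric])
  moreover have "0 < (1 - r * cos x)\<^sup>2" using denom_pos[OF r, of x] by simp
  ultimately show ?thesis by (metis add_pos_nonneg zero_le_power2)
qed

lemma Ar_deriv:
  assumes r: "0 \<le> r" "r < 1"
  shows "(Ar r has_field_derivative (r * cos x - r\<^sup>2) / (1 - 2 * r * cos x + r\<^sup>2)) (at x)"
proof -
  define g where "g = (\<lambda>x. 1 - r * cos x)"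
  define f where "f = (\<lambda>x. r * sin x)"
  have d: "g x \<noteq> 0" using denom_pos[OF r, of x] by (simp add: g_def)
  have df: "(f has_field_derivative r * cos x) (at x)" unfolding f_def
    by (intro DERIV_cmult DERIV_sin)
  have dg: "(g has_field_derivative r * sin x) (at x)"
  proof -
    have "((\<lambda>x. 1 - r * cos x) has_field_derivative 0 - r * (- sin x)) (at x)"
      by (intro DERIV_diff DERIV_const DERIV_cmult DERIV_cos)
    then show ?thesis unfolding g_def by simp
  qed
  have du: "((\<lambda>x. f x / g x) has_field_derivative
      (r * cos x * g x - f x * (r * sin x)) / (g x * g x)) (at x)"
    by (rule DERIV_divide[OF df dg d])
  have "((\<lambda>x. arctan (f x / g x)) has_field_derivative
      inverse (1 + (f x / g x)\<^sup>2) * ((r * cos x * g x - f x * (r * sin x)) / (g x * g x))) (at x)"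
    by (rule DERIV_chain2[OF DERIV_arctan du])
  moreover have "(\<lambda>x. arctan (f x / g x)) = Ar r" by (simp add: Ar_def[abs_def] f_def g_def)
  moreover have "inverse (1 + (f x / g x)\<^sup>2) * ((r * cos x * g x - f x * (r * sin x)) / (g x * g x))
     = (r * cos x - r\<^sup>2) / (1 - 2 * r * cos x + r\<^sup>2)"
  proof -
    have e1: "1 + (f x / g x)\<^sup>2 = (1 - 2 * r * cos x + r\<^sup>2) / (g x * g x)"
      using d trig_id[of r x] by (simp add: f_def g_def power2_eq_square add_divide_distrib[symmetric] divide_simps)
    have e2: "r * cos x * g x - f x * (r * sin x) = r * cos x - r\<^sup>2"
      using trig_id2[of r x] by (simp add: f_def g_def)
    have p: "1 - 2 * r * cos x + r\<^sup>2 \<noteq> 0" using denom2_pos[OF r, of x] by simp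
    show ?thesis unfolding e1 e2 using d p by (simp add: divide_simps)
  qed
  ultimately show ?thesis by simp
qed

lemma Sr_eq_Ar:
  assumes r: "0 \<le> r" "r < 1"
  shows "Sr r x = Ar r x"
proof -
  have "\<forall>x. ((\<lambda>x. Sr r x - Ar r x) has_field_derivative 0) (at x)"
  proof
    fix x
    have "((\<lambda>x. Sr r x - Ar r x) has_field_derivative cr r x - (r * cos x - r\<^sup>2) / (1 - 2 * r * cos x + r\<^sup>2)) (at x)"
      by (intro DERIV_diff Sr_deriv Ar_deriv r)
    then show "((\<lambda>x. Sr r x - Ar r x) has_field_derivative 0) (at x)"
      by (simp add: cr_closed[OF r])
  qed
  from DERIV_isconst_all[OF this, of x 0] show ?thesis
    by (simp add: Sr_def Ar_def)
qed

lemma arctan_half: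
  assumes "0 < t" "t \<le> pi"
  shows "arctan (sin t / (1 - cos t)) = (pi - t) / 2"
proof -
  define u where "u = t / 2"
  have u: "0 < u" "u \<le> pi / 2" using assms by (auto simp: u_def)
  have su: "sin u > 0" using u by (intro sin_gt_zero) auto
  have t: "t = 2 * u" by (simp add: u_def)
  have e1: "sin t = 2 * sin u * cos u" unfolding t by (rule sin_double)
  have e2: "1 - cos t = 2 * sin u * sin u" unfolding t cos_double_sin by (simp add: power2_eq_square)
  have "sin t / (1 - cos t) = cos u / sin u"
    unfolding e1 e2 using su by (simp add: divide_simps)
  also have "\<dots> = tan (pi / 2 - u)"
    by (simp add: tan_cot' cot_def)
  finally have "arctan (sin t / (1 - cos t)) = arctan (tan (pi / 2 - u))" by simp
  also have "\<dots> = pi / 2 - u" using u by (intro arctan_tan) auto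
  finally show ?thesis by (simp add: u_def field_simps)
qed

lemma arctan_diff_le:
  assumes "a \<le> b"
  shows "arctan b - arctan a \<le> b - a"
proof (cases "a = b")
  case False
  then have ab: "a < b" using assms by simp
  obtain z where z: "a < z" "z < b" "arctan b - arctan a = (b - a) * inverse (1 + z\<^sup>2)"
    using MVT2[OF ab, of arctan "\<lambda>z. inverse (1 + z\<^sup>2)"] DERIV_arctan by blast
  have "inverse (1 + z\<^sup>2) \<le> 1"
    by (simp add: inverse_le_1_iff) 
  then have "(b - a) * inverse (1 + z\<^sup>2) \<le> (b - a) * 1"
    using ab by (intro mult_left_mono) auto
  then show ?thesis using z by simp
qed simp

lemma Ar_nonneg:
  assumes r: "0 \<le> r" "r < 1" and t: "0 \<le> t" "t \<le> pi"
  shows "0 \<le> Ar r t"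
  unfolding Ar_def using denom_pos[OF r, of t] sin_ge_zero[OF t] r by simp

lemma Ar_le:
  assumes r: "0 \<le> r" "r < 1" and t: "0 \<le> t" "t \<le> pi"
  shows "Ar r t \<le> (pi - t) / 2"
proof (cases "t = 0")
  case True then show ?thesis by (simp add: Ar_def)
next
  case False
  then have t0: "0 < t" using t by simp
  have c: "cos t < 1" using t0 t cos_monotone_0_pi[of 0 t] by simp
  have d1: "0 < 1 - r * cos t" by (rule denom_pos[OF r])
  have "r * sin t / (1 - r * cos t) \<le> sin t / (1 - cos t)"
  proof -
    have "r * sin t * (1 - cos t) \<le> sin t * (1 - r * cos t)"
    proof -
      have "sin t * (1 - r * cos t) - r * sin t * (1 - cos t) = sin t * (1 - r)"
        by (simp add: algebra_simps)
      moreover have "0 \<le> sin t * (1 - r)" using sin_ge_zero[OF t] r by simp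
      ultimately show ?thesis by linarith
    qed
    then show ?thesis using d1 c by (simp add: divide_simps)
  qed
  then have "Ar r t \<le> arctan (sin t / (1 - cos t))" unfolding Ar_def by (simp add: arctan_le_iff)
  also have "\<dots> = (pi - t) / 2" by (rule arctan_half[OF t0 t(2)])
  finally show ?thesis .
qed

lemma Ar_ge:
  assumes r: "0 \<le> r" "r < 1" and t: "\<delta> \<le> t" "t \<le> pi" and d: "0 < \<delta>" "\<delta> \<le> pi / 2"
  shows "(pi - t) / 2 - (1 - r) / (1 - cos \<delta>)\<^sup>2 \<le> Ar r t"
proof -
  have t0: "0 < t" using t d by simp
  have cd: "0 \<le> cos \<delta>" using d by (intro cos_ge_zero) auto
  have ct: "cos t \<le> cos \<delta>" using t d by (intro cos_monotone_0_pi_le) auto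
  have cd1: "cos \<delta> < 1" using d cos_monotone_0_pi[of 0 \<delta>] by simp
  have d1: "1 - cos \<delta> \<le> 1 - r * cos t"
  proof (cases "cos t \<ge> 0")
    case True
    then have "r * cos t \<le> 1 * cos t" using r by (intro mult_right_mono) auto
    then show ?thesis using ct by simp
  next
    case False
    then have "r * cos t \<le> 0" using r by (simp add: mult_nonneg_nonpos)
    then show ?thesis using cd by simp
  qed
  have d2: "1 - cos \<delta> \<le> 1 - cos t" using ct by simp
  have p: "0 < 1 - cos \<delta>" using cd1 by simp
  define a where "a = r * sin t / (1 - r * cos t)"
  define b where "b = sin t / (1 - cos t)"
  have dpos: "0 < 1 - r * cos t" by (rule denom_pos[OF r])
  have dpos2: "0 < 1 - cos t" using d2 p by simp
  have "b - a = sin t * (1 - r) / ((1 - r * cos t) * (1 - cos t))"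
    unfolding a_def b_def using dpos dpos2 by (simp add: field_simps)
  also have "\<dots> \<le> 1 * (1 - r) / ((1 - cos \<delta>) * (1 - cos \<delta>))"
  proof (rule frac_le)
    show "0 \<le> 1 * (1 - r)" using r by simp
    show "sin t * (1 - r) \<le> 1 * (1 - r)" using r sin_le_one[of t] by (intro mult_right_mono) auto
    show "0 < (1 - cos \<delta>) * (1 - cos \<delta>)" using p by simp
    show "(1 - cos \<delta>) * (1 - cos \<delta>) \<le> (1 - r * cos t) * (1 - cos t)"
      using d1 d2 p by (intro mult_mono) auto
  qed
  finally have bma: "b - a \<le> (1 - r) / (1 - cos \<delta>)\<^sup>2" by (simp add: power2_eq_square)
  have ab: "a \<le> b"
  proof -
    have "0 \<le> sin t * (1 - r) / ((1 - r * cos t) * (1 - cos t))"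
      using sin_ge_zero[of t] t0 t r dpos dpos2 by simp
    moreover have "b - a = sin t * (1 - r) / ((1 - r * cos t) * (1 - cos t))"
      unfolding a_def b_def using dpos dpos2 by (simp add: field_simps)
    ultimately show ?thesis by simp
  qed
  have "arctan b - arctan a \<le> b - a" by (rule arctan_diff_le[OF ab])
  moreover have "arctan b = (pi - t) / 2" unfolding b_def by (rule arctan_half[OF t0 t(2)])
  ultimately show ?thesis using bma unfolding Ar_def a_def[symmetric] by simp
qed

definition Er :: "real \<Rightarrow> real \<Rightarrow> real" where
  "Er r x = Cr r 0 - Cr r x - (pi * x / 2 - x\<^sup>2 / 4)"

lemma Er_deriv:
  assumes r: "0 \<le> r" "r < 1"
  shows "(Er r has_field_derivative (Ar r x - (pi - x) / 2)) (at x)"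
proof -
  have "(Er r has_field_derivative (0 - (- Sr r x) - (pi / 2 - 2 * x / 4))) (at x)"
    unfolding Er_def[abs_def]
    by (rule derivative_eq_intros Cr_deriv[OF r] refl | simp)+
  then show ?thesis by (simp add: Sr_eq_Ar[OF r] field_simps)
qed

lemma Er_upper:
  assumes r: "0 \<le> r" "r < 1" and x: "0 \<le> x" "x \<le> pi"
  shows "Er r x \<le> 0"
proof -
  have "Er r x \<le> Er r 0"
  proof (rule DERIV_nonpos_imp_nonincreasing[OF x(1)])
    fix t assume t: "0 \<le> t" "t \<le> x"
    show "\<exists>y. DERIV (Er r) t :> y \<and> y \<le> 0"
      using Er_deriv[OF r, of t] Ar_le[OF r, of t] t x by auto
  qed
  then show ?thesis by (simp add: Er_def)
qed

lemma Er_lower1: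
  assumes r: "0 \<le> r" "r < 1" and x: "0 \<le> x" "x \<le> pi"
  shows "- (pi / 2) * x \<le> Er r x"
proof -
  have "Er r 0 + pi / 2 * 0 \<le> Er r x + pi / 2 * x"
  proof (rule DERIV_nonneg_imp_nondecreasing[OF x(1), where f = "\<lambda>t. Er r t + pi / 2 * t"])
    fix t assume t: "0 \<le> t" "t \<le> x"
    have A0: "0 \<le> Ar r t" using Ar_nonneg[OF r, of t] t x by simp
    have eq: "(Ar r t - (pi - t) / 2) + pi / 2 * 1 = Ar r t + t / 2" by (simp add: field_simps)
    have "DERIV (\<lambda>t. Er r t + pi / 2 * t) t :> (Ar r t - (pi - t) / 2) + pi / 2 * 1"
      by (intro DERIV_add Er_deriv[OF r] DERIV_cmult DERIV_ident)
    moreover have "0 \<le> (Ar r t - (pi - t) / 2) + pi / 2 * 1" unfolding eq using A0 t by simp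
    ultimately show "\<exists>y. DERIV (\<lambda>t. Er r t + pi / 2 * t) t :> y \<and> 0 \<le> y" by blast
  qed
  then show ?thesis by (simp add: Er_def)
qed

lemma Er_lower:
  assumes r: "0 \<le> r" "r < 1" and x: "0 \<le> x" "x \<le> pi" and d: "0 < \<delta>" "\<delta> \<le> pi / 2"
  shows "- (pi / 2) * \<delta> - (1 - r) / (1 - cos \<delta>)\<^sup>2 * pi \<le> Er r x"
proof (cases "x \<le> \<delta>")
  case True
  have "- (pi / 2) * \<delta> \<le> - (pi / 2) * x" using True by simp
  moreover have "0 \<le> (1 - r) / (1 - cos \<delta>)\<^sup>2 * pi" using r by simp
  ultimately show ?thesis using Er_lower1[OF r x] by linarith
next
  case False
  define K where "K = (1 - r) / (1 - cos \<delta>)\<^sup>2"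
  have K0: "0 \<le> K" using r by (simp add: K_def)
  have "Er r \<delta> + K * \<delta> \<le> Er r x + K * x"
  proof (rule DERIV_nonneg_imp_nondecreasing[where f = "\<lambda>t. Er r t + K * t"])
    show "\<delta> \<le> x" using False by simp
    fix t assume t: "\<delta> \<le> t" "t \<le> x"
    have "DERIV (\<lambda>t. Er r t + K * t) t :> (Ar r t - (pi - t) / 2) + K * 1"
      by (intro DERIV_add Er_deriv[OF r] DERIV_cmult DERIV_ident)
    moreover have "0 \<le> (Ar r t - (pi - t) / 2) + K * 1"
      using Ar_ge[OF r _ _ d, of t] t x unfolding K_def by simp
    ultimately show "\<exists>y. DERIV (\<lambda>t. Er r t + K * t) t :> y \<and> 0 \<le> y" by blast
  qed
  moreover have "- (pi / 2) * \<delta> \<le> Er r \<delta>" using Er_lower1[OF r, of \<delta>] d by simp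
  moreover have "K * (x - \<delta>) \<le> K * pi" using K0 x d by (intro mult_left_mono) auto
  ultimately show ?thesis unfolding K_def[symmetric] by (simp add: algebra_simps)
qed

lemma Cr_cont:
  fixes x :: real
  shows "continuous_on {0..1} (\<lambda>r. Cr r x)"
proof -
  have "continuous_on {0..1} (\<lambda>r. \<Sum>k. r ^ Suc k * cos (real (Suc k) * x) / (real (Suc k))\<^sup>2)"
  proof (rule uniform_limit_theorem; (intro always_eventually allI)?)
    show "uniform_limit {0..1} (\<lambda>n r. \<Sum>k<n. r ^ Suc k * cos (real (Suc k) * x) / (real (Suc k))\<^sup>2)
           (\<lambda>r. \<Sum>k. r ^ Suc k * cos (real (Suc k) * x) / (real (Suc k))\<^sup>2) sequentially"
    proof (rule Weierstrass_m_test[where M = "\<lambda>k. 1 / (real (Suc k))\<^sup>2"])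
      fix n and r :: real assume r: "r \<in> {0..1}"
      have "\<bar>r ^ Suc n\<bar> \<le> 1" using r by (simp add: abs_of_nonneg power_le_one del: power_Suc)
      moreover have "\<bar>cos (real (Suc n) * x)\<bar> \<le> 1" by (rule abs_cos_le_one)
      ultimately have "\<bar>r ^ Suc n\<bar> * \<bar>cos (real (Suc n) * x)\<bar> \<le> 1 * 1"
        by (intro mult_mono) auto
      then show "norm (r ^ Suc n * cos (real (Suc n) * x) / (real (Suc n))\<^sup>2) \<le> 1 / (real (Suc n))\<^sup>2"
        by (simp add: abs_mult divide_right_mono del: of_nat_Suc power_Suc)
    next
      show "summable (\<lambda>k. 1 / (real (Suc k))\<^sup>2)"
        using inverse_squares_sums by (simp add: sums_iff add.commute)
    qed
  qed (auto intro!: continuous_intros)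
  then show ?thesis unfolding Cr_def .
qed

lemma Er1_zero:
  assumes x: "0 \<le> x" "x \<le> pi"
  shows "Cr 1 0 - Cr 1 x - (pi * x / 2 - x\<^sup>2 / 4) = 0"
proof -
  define rs where "rs = (\<lambda>n::nat. real n / real (Suc n))"
  have rs_lim: "rs \<longlonglongrightarrow> 1" unfolding rs_def by (rule LIMSEQ_n_over_Suc_n)
  have rs0: "0 \<le> rs n" for n by (simp add: rs_def)
  have rs1: "rs n < 1" for n by (simp add: rs_def)
  have ev: "\<forall>\<^sub>F n in sequentially. rs n \<in> {0..1}" using rs0 rs1 by (auto intro!: always_eventually less_imp_le)
  have c0: "(\<lambda>n. Cr (rs n) 0) \<longlonglongrightarrow> Cr 1 0"
    by (rule continuous_on_tendsto_compose[OF Cr_cont rs_lim _ ev]) simp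
  have cx: "(\<lambda>n. Cr (rs n) x) \<longlonglongrightarrow> Cr 1 x"
    by (rule continuous_on_tendsto_compose[OF Cr_cont rs_lim _ ev]) simp
  define L where "L = Cr 1 0 - Cr 1 x - (pi * x / 2 - x\<^sup>2 / 4)"
  have EL: "(\<lambda>n. Er (rs n) x) \<longlonglongrightarrow> L"
    unfolding Er_def L_def by (intro tendsto_intros c0 cx)
  have L0: "L \<le> 0"
    by (rule LIMSEQ_le_const2[OF EL]) (use Er_upper[OF rs0 rs1 x] in auto)
  have Ld: "- (pi / 2) * \<delta> \<le> L" if d: "0 < \<delta>" "\<delta> \<le> pi / 2" for \<delta>
  proof (rule LIMSEQ_le[OF _ EL])
    have "(\<lambda>n. - (pi / 2) * \<delta> - (1 - rs n) / (1 - cos \<delta>)\<^sup>2 * pi) \<longlonglongrightarrow>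
           - (pi / 2) * \<delta> - (1 - 1) / (1 - cos \<delta>)\<^sup>2 * pi"
    proof -
      have "cos \<delta> < 1" using d cos_monotone_0_pi[of 0 \<delta>] by simp
      then have cd1: "(1 - cos \<delta>)\<^sup>2 \<noteq> 0" by simp
      show ?thesis by (intro tendsto_intros rs_lim cd1)
    qed
    then show "(\<lambda>n. - (pi / 2) * \<delta> - (1 - rs n) / (1 - cos \<delta>)\<^sup>2 * pi) \<longlonglongrightarrow> - (pi / 2) * \<delta>"
      by simp
    show "\<exists>N. \<forall>n\<ge>N. - (pi / 2) * \<delta> - (1 - rs n) / (1 - cos \<delta>)\<^sup>2 * pi \<le> Er (rs n) x"
      using Er_lower[OF rs0 rs1 x d] by auto
  qed
  have "L = 0"
  proof (rule ccontr)
    assume "L \<noteq> 0"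
    then have Lneg: "L < 0" using L0 by simp
    define \<delta> where "\<delta> = min (pi / 2) (- L / pi)"
    have "0 < - L / pi" using Lneg pi_gt_zero by (simp add: divide_neg_pos)
    then have d1: "0 < \<delta>" using pi_gt_zero unfolding \<delta>_def by auto
    have d2: "\<delta> \<le> pi / 2" unfolding \<delta>_def by (rule min.cobounded1)
    note d = d1 d2
    have "\<delta> \<le> - L / pi" by (simp add: \<delta>_def)
    then have "pi * \<delta> \<le> - L" using pi_gt_zero by (simp add: field_simps)
    then have "L < - (pi / 2) * \<delta>" using Lneg d pi_gt_zero by (simp add: field_simps)
    with Ld[OF d] show False by simp
  qed
  then show ?thesis unfolding L_def .
qed

lemma cos_series:
  assumes x: "0 \<le> x" "x \<le> pi"
  shows "(\<lambda>k. cos (real (Suc k) * x) / (real (Suc k))\<^sup>2) sums (pi\<^sup>2 / 6 - pi * x / 2 + x\<^sup>2 / 4)"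
proof -
  have sq: "(\<lambda>k. 1 / (real (Suc k))\<^sup>2) sums (pi\<^sup>2 / 6)"
    using inverse_squares_sums by (simp add: add.commute)
  have C10: "Cr 1 0 = pi\<^sup>2 / 6" unfolding Cr_def using sq by (simp add: sums_iff)
  have summ: "summable (\<lambda>k. cos (real (Suc k) * x) / (real (Suc k))\<^sup>2)"
  proof (rule summable_comparison_test'[OF sums_summable[OF sq]])
    fix n
    show "norm (cos (real (Suc n) * x) / (real (Suc n))\<^sup>2) \<le> 1 / (real (Suc n))\<^sup>2"
      using abs_cos_le_one[of "real (Suc n) * x"]
      by (simp add: divide_right_mono del: of_nat_Suc)
  qed
  have "Cr 1 x = pi\<^sup>2 / 6 - pi * x / 2 + x\<^sup>2 / 4"
    using Er1_zero[OF x] C10 by simp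
  then show ?thesis using summ unfolding Cr_def by (simp add: sums_iff)
qed

definition dd :: "nat \<Rightarrow> nat \<Rightarrow> nat" where
  "dd m n = (if m \<le> n then n - m else m - n)"

lemma count_sum:
  fixes h :: "nat \<Rightarrow> real"
  assumes h0: "h 0 = 0"
  shows "(\<Sum>m\<in>{1..N}. \<Sum>n\<in>{1..N}. h (dd m n)) = 2 * (\<Sum>k\<in>{1..N}. (real N - real k) * h k)"
proof (induction N)
  case 0 then show ?case by simp
next
  case (Suc N)
  have r1: "(\<Sum>m\<in>{1..N}. h (dd m (Suc N))) = (\<Sum>k\<in>{1..N}. h k)"
  proof -
    have "(\<Sum>m\<in>{1..N}. h (dd m (Suc N))) = (\<Sum>m\<in>{1..N}. h (Suc N - m))"
      by (intro sum.cong) (auto simp: dd_def)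
    also have "\<dots> = (\<Sum>k\<in>{1..N}. h k)"
      by (subst sum.atLeastAtMost_rev) (intro sum.cong, auto)
    finally show ?thesis .
  qed
  have r2: "(\<Sum>n\<in>{1..Suc N}. h (dd (Suc N) n)) = (\<Sum>k\<in>{1..N}. h k)"
  proof -
    have "(\<Sum>n\<in>{1..Suc N}. h (dd (Suc N) n)) = (\<Sum>n\<in>{1..N}. h (dd (Suc N) n)) + h 0"
      by (simp add: dd_def)
    also have "(\<Sum>n\<in>{1..N}. h (dd (Suc N) n)) = (\<Sum>m\<in>{1..N}. h (dd m (Suc N)))"
      by (intro sum.cong) (auto simp: dd_def)
    finally show ?thesis using r1 h0 by simp
  qed
  have "(\<Sum>m\<in>{1..Suc N}. \<Sum>n\<in>{1..Suc N}. h (dd m n))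
      = (\<Sum>m\<in>{1..N}. \<Sum>n\<in>{1..Suc N}. h (dd m n)) + (\<Sum>n\<in>{1..Suc N}. h (dd (Suc N) n))"
    by simp
  also have "(\<Sum>m\<in>{1..N}. \<Sum>n\<in>{1..Suc N}. h (dd m n))
      = (\<Sum>m\<in>{1..N}. \<Sum>n\<in>{1..N}. h (dd m n)) + (\<Sum>m\<in>{1..N}. h (dd m (Suc N)))"
    by (simp add: sum.distrib)
  finally have L: "(\<Sum>m\<in>{1..Suc N}. \<Sum>n\<in>{1..Suc N}. h (dd m n))
      = 2 * (\<Sum>k\<in>{1..N}. (real N - real k) * h k) + 2 * (\<Sum>k\<in>{1..N}. h k)"
    using Suc.IH r1 r2 by simp
  have "(\<Sum>k\<in>{1..Suc N}. (real (Suc N) - real k) * h k)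
     = (\<Sum>k\<in>{1..N}. (real (Suc N) - real k) * h k)"
    by simp
  also have "\<dots> = (\<Sum>k\<in>{1..N}. (real N - real k) * h k) + (\<Sum>k\<in>{1..N}. h k)"
    by (simp add: sum.distrib[symmetric] algebra_simps)
  finally show ?case using L by simp
qed

lemma avg_limit:
  fixes h :: "nat \<Rightarrow> real"
  assumes h0: "h 0 = 0" and hnn: "\<And>k. 0 \<le> h k" and hle: "\<And>k. k \<ge> 1 \<Longrightarrow> h k \<le> 1 / (real k)\<^sup>2"
    and hs: "(\<lambda>k. h (Suc k)) sums s"
  shows "(\<lambda>N. 2 * (\<Sum>k\<in>{1..N}. (real N - real k) * h k) / real N) \<longlonglongrightarrow> 2 * s"
proof -
  define T where "T N = (\<Sum>k\<in>{1..N}. real k * h k) / real N" for N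
  have P: "(\<lambda>N. \<Sum>k\<in>{1..N}. h k) \<longlonglongrightarrow> s"
  proof -
    have "(\<lambda>N. \<Sum>k<N. h (Suc k)) \<longlonglongrightarrow> s" using hs by (simp add: sums_def)
    moreover have "(\<Sum>k<N. h (Suc k)) = (\<Sum>k\<in>{1..N}. h k)" for N
      by (induction N) auto
    ultimately show ?thesis by simp
  qed
  have T0: "T \<longlonglongrightarrow> 0"
  proof (rule tendsto_sandwich[where f = "\<lambda>N. 0" and h = "\<lambda>N. (1 + ln (real N)) / real N"])
    show "\<forall>\<^sub>F N in sequentially. 0 \<le> T N"
      using hnn by (auto simp: T_def intro!: always_eventually divide_nonneg_nonneg sum_nonneg)
    show "\<forall>\<^sub>F N in sequentially. T N \<le> (1 + ln (real N)) / real N"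
    proof (rule eventually_mono[OF eventually_ge_at_top[of 1]])
      fix N :: nat assume N: "1 \<le> N"
      have "(\<Sum>k\<in>{1..N}. real k * h k) \<le> (\<Sum>k\<in>{1..N}. inverse (real k))"
      proof (rule sum_mono)
        fix k assume k: "k \<in> {1..N}"
        have "real k * h k \<le> real k * (1 / (real k)\<^sup>2)"
          using hle[of k] k by (intro mult_left_mono) auto
        also have "\<dots> = inverse (real k)" using k by (simp add: power2_eq_square field_simps)
        finally show "real k * h k \<le> inverse (real k)" .
      qed
      also have "\<dots> = harm N" by (simp add: harm_def)
      also have "harm N \<le> 1 + ln (real N)"
      proof -
        obtain M where M: "N = Suc M" using N by (cases N) auto
        have "harm (Suc M) - ln (real (Suc M)) \<le> harm (Suc 0) - ln (real (Suc 0))"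
          using decseq_harm_diff_ln unfolding decseq_def by (metis le0)
        then show ?thesis by (simp add: M harm_def)
      qed
      finally show "T N \<le> (1 + ln (real N)) / real N"
        unfolding T_def using N by (simp add: divide_right_mono)
    qed
    have "(\<lambda>N. 1 / real N + ln (real N) / real N) \<longlonglongrightarrow> 0 + 0"
      by (intro tendsto_add lim_inverse_n' lim_ln_over_n)
    then show "(\<lambda>N. (1 + ln (real N)) / real N) \<longlonglongrightarrow> 0"
      by (simp add: add_divide_distrib)
  qed simp
  have "(\<lambda>N. 2 * ((\<Sum>k\<in>{1..N}. h k) - T N)) \<longlonglongrightarrow> 2 * (s - 0)"
    by (intro tendsto_intros P T0)
  moreover have "\<forall>\<^sub>F N in sequentially. 2 * ((\<Sum>k\<in>{1..N}. h k) - T N)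
      = 2 * (\<Sum>k\<in>{1..N}. (real N - real k) * h k) / real N"
  proof (rule eventually_mono[OF eventually_ge_at_top[of 1]])
    fix N :: nat assume N: "1 \<le> N"
    have "(\<Sum>k\<in>{1..N}. (real N - real k) * h k) = real N * (\<Sum>k\<in>{1..N}. h k) - (\<Sum>k\<in>{1..N}. real k * h k)"
      by (simp add: sum_distrib_left sum_subtractf[symmetric] algebra_simps)
    then show "2 * ((\<Sum>k\<in>{1..N}. h k) - T N) = 2 * (\<Sum>k\<in>{1..N}. (real N - real k) * h k) / real N"
      unfolding T_def using N by (simp add: field_simps)
  qed
  ultimately show ?thesis by (simp add: Lim_transform_eventually)
qed

definition hA :: "real \<Rightarrow> nat \<Rightarrow> real" where
  "hA \<theta> k = (cos (real k * \<theta>))\<^sup>2 / (real k)\<^sup>2"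
definition hB :: "real \<Rightarrow> nat \<Rightarrow> real" where
  "hB \<theta> k = (sin (real k * \<theta>))\<^sup>2 / (real k)\<^sup>2"

lemma dd_real: "real (dd m n) = \<bar>real m - real n\<bar>"
  by (simp add: dd_def of_nat_diff)

lemma cos_abs_sq: "(cos (\<bar>a::real\<bar> * t))\<^sup>2 = (cos (a * t))\<^sup>2"
  by (cases "a \<ge> 0") auto

lemma sin_abs_sq: "(sin (\<bar>a::real\<bar> * t))\<^sup>2 = (sin (a * t))\<^sup>2"
  by (cases "a \<ge> 0") auto

lemma A_prod: "A_entry \<theta> m n * A_entry \<theta> n m = - hA \<theta> (dd m n)"
proof (cases "m = n")
  case True then show ?thesis by (simp add: A_entry_def hA_def dd_def)
next
  case False
  define a where "a = real m - real n"
  have a0: "a \<noteq> 0" using False by (simp add: a_def)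
  have ba: "real n - real m = - a" by (simp add: a_def)
  have e1: "A_entry \<theta> m n = cos (a * \<theta>) / a"
    using False unfolding A_entry_def a_def[symmetric] by simp
  have e2: "A_entry \<theta> n m = cos ((- a) * \<theta>) / (- a)"
    using False unfolding A_entry_def ba by simp
  have "A_entry \<theta> m n * A_entry \<theta> n m = cos (a * \<theta>) / a * (cos ((- a) * \<theta>) / (- a))"
    unfolding e1 e2 ..
  also have "\<dots> = - ((cos (a * \<theta>))\<^sup>2 / a\<^sup>2)" by (simp add: power2_eq_square)
  also have "\<dots> = - hA \<theta> (dd m n)"
    unfolding hA_def dd_real a_def[symmetric] cos_abs_sq by simp
  finally show ?thesis .
qed

lemma B_prod: "B_entry \<theta> m n * B_entry \<theta> n m = (if m = n then \<theta>\<^sup>2 else 0) + hB \<theta> (dd m n)"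
proof (cases "m = n")
  case True then show ?thesis by (simp add: B_entry_def hB_def dd_def power2_eq_square)
next
  case False
  define a where "a = real m - real n"
  have a0: "a \<noteq> 0" using False by (simp add: a_def)
  have ba: "real n - real m = - a" by (simp add: a_def)
  have e1: "B_entry \<theta> m n = sin (a * \<theta>) / a"
    using False unfolding B_entry_def a_def[symmetric] by simp
  have e2: "B_entry \<theta> n m = sin ((- a) * \<theta>) / (- a)"
    using False unfolding B_entry_def ba by simp
  have "B_entry \<theta> m n * B_entry \<theta> n m = sin (a * \<theta>) / a * (sin ((- a) * \<theta>) / (- a))"
    unfolding e1 e2 ..
  also have "\<dots> = (sin (a * \<theta>))\<^sup>2 / a\<^sup>2" by (simp add: power2_eq_square)
  also have "\<dots> = hB \<theta> (dd m n)"
    unfolding hB_def dd_real a_def[symmetric] sin_abs_sq by simp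
  finally show ?thesis using False by simp
qed

lemma trace_A: "trace_sq (A_entry \<theta>) N = - (2 * (\<Sum>k\<in>{1..N}. (real N - real k) * hA \<theta> k))"
proof -
  have "trace_sq (A_entry \<theta>) N = - (\<Sum>m\<in>{1..N}. \<Sum>n\<in>{1..N}. hA \<theta> (dd m n))"
    unfolding trace_sq_def A_prod by (simp add: sum_negf)
  also have "\<dots> = - (2 * (\<Sum>k\<in>{1..N}. (real N - real k) * hA \<theta> k))"
    by (subst count_sum) (simp_all add: hA_def)
  finally show ?thesis .
qed

lemma trace_B: "trace_sq (B_entry \<theta>) N = real N * \<theta>\<^sup>2 + 2 * (\<Sum>k\<in>{1..N}. (real N - real k) * hB \<theta> k)"
proof -
  have "trace_sq (B_entry \<theta>) N = (\<Sum>m\<in>{1..N}. \<Sum>n\<in>{1..N}. (if m = n then \<theta>\<^sup>2 else 0))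
          + (\<Sum>m\<in>{1..N}. \<Sum>n\<in>{1..N}. hB \<theta> (dd m n))"
    unfolding trace_sq_def B_prod by (simp add: sum.distrib)
  also have "(\<Sum>m\<in>{1..N}. \<Sum>n\<in>{1..N}. (if m = n then \<theta>\<^sup>2 else 0)) = real N * \<theta>\<^sup>2"
    by simp
  also have "(\<Sum>m\<in>{1..N}. \<Sum>n\<in>{1..N}. hB \<theta> (dd m n)) = 2 * (\<Sum>k\<in>{1..N}. (real N - real k) * hB \<theta> k)"
    by (rule count_sum) (simp add: hB_def)
  finally show ?thesis .
qed

lemma sq_sums: "(\<lambda>k. 1 / (real (Suc k))\<^sup>2) sums (pi\<^sup>2 / 6)"
  using inverse_squares_sums by (simp add: add.commute)

lemma hA_sums:
  assumes "0 \<le> \<theta>" "\<theta> \<le> pi / 2"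
  shows "(\<lambda>k. hA \<theta> (Suc k)) sums (1/2 * (pi\<^sup>2 / 6) + 1/2 * (pi\<^sup>2 / 6 - pi * (2 * \<theta>) / 2 + (2 * \<theta>)\<^sup>2 / 4))"
proof -
  have c: "(\<lambda>k. cos (real (Suc k) * (2 * \<theta>)) / (real (Suc k))\<^sup>2) sums (pi\<^sup>2 / 6 - pi * (2 * \<theta>) / 2 + (2 * \<theta>)\<^sup>2 / 4)"
    using assms by (intro cos_series) auto
  have "(\<lambda>k. 1/2 * (1 / (real (Suc k))\<^sup>2) + 1/2 * (cos (real (Suc k) * (2 * \<theta>)) / (real (Suc k))\<^sup>2)) sums
      (1/2 * (pi\<^sup>2 / 6) + 1/2 * (pi\<^sup>2 / 6 - pi * (2 * \<theta>) / 2 + (2 * \<theta>)\<^sup>2 / 4))"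
    by (intro sums_add sums_mult sq_sums c)
  moreover have "hA \<theta> (Suc k) = 1/2 * (1 / (real (Suc k))\<^sup>2) + 1/2 * (cos (real (Suc k) * (2 * \<theta>)) / (real (Suc k))\<^sup>2)" for k
  proof -
    have "cos (real (Suc k) * (2 * \<theta>)) = 2 * (cos (real (Suc k) * \<theta>))\<^sup>2 - 1"
      using cos_double_cos[of "real (Suc k) * \<theta>"] by (simp add: mult_ac)
    then show ?thesis unfolding hA_def by (simp add: field_simps del: of_nat_Suc)
  qed
  ultimately show ?thesis by simp
qed

lemma hB_sums:
  assumes "0 \<le> \<theta>" "\<theta> \<le> pi / 2"
  shows "(\<lambda>k. hB \<theta> (Suc k)) sums (1/2 * (pi\<^sup>2 / 6) - 1/2 * (pi\<^sup>2 / 6 - pi * (2 * \<theta>) / 2 + (2 * \<theta>)\<^sup>2 / 4))"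
proof -
  have c: "(\<lambda>k. cos (real (Suc k) * (2 * \<theta>)) / (real (Suc k))\<^sup>2) sums (pi\<^sup>2 / 6 - pi * (2 * \<theta>) / 2 + (2 * \<theta>)\<^sup>2 / 4)"
    using assms by (intro cos_series) auto
  have "(\<lambda>k. 1/2 * (1 / (real (Suc k))\<^sup>2) - 1/2 * (cos (real (Suc k) * (2 * \<theta>)) / (real (Suc k))\<^sup>2)) sums
      (1/2 * (pi\<^sup>2 / 6) - 1/2 * (pi\<^sup>2 / 6 - pi * (2 * \<theta>) / 2 + (2 * \<theta>)\<^sup>2 / 4))"
    by (intro sums_diff sums_mult sq_sums c)
  moreover have "hB \<theta> (Suc k) = 1/2 * (1 / (real (Suc k))\<^sup>2) - 1/2 * (cos (real (Suc k) * (2 * \<theta>)) / (real (Suc k))\<^sup>2)" for k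
  proof -
    have "cos (real (Suc k) * (2 * \<theta>)) = 1 - 2 * (sin (real (Suc k) * \<theta>))\<^sup>2"
      using cos_double_sin[of "real (Suc k) * \<theta>"] by (simp add: mult_ac)
    then show ?thesis unfolding hB_def by (simp add: field_simps del: of_nat_Suc)
  qed
  ultimately show ?thesis by simp
qed

lemma hA_le: "k \<ge> 1 \<Longrightarrow> hA \<theta> k \<le> 1 / (real k)\<^sup>2"
  unfolding hA_def by (intro divide_right_mono) (auto simp: abs_square_le_1)

lemma hB_le: "k \<ge> 1 \<Longrightarrow> hB \<theta> k \<le> 1 / (real k)\<^sup>2"
  unfolding hB_def by (intro divide_right_mono) (auto simp: abs_square_le_1)

theorem theorem3:
  fixes \<theta> :: real
  assumes "0 \<le> \<theta>" and "\<theta> \<le> pi / 2"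
  shows "((\<lambda>N. trace_sq (A_entry \<theta>) N / real N)
           \<longlonglongrightarrow> - (pi\<^sup>2 / 3 + \<theta>\<^sup>2 - pi * \<theta>)) \<and>
         ((\<lambda>N. trace_sq (B_entry \<theta>) N / real N) \<longlonglongrightarrow> pi * \<theta>)"
proof
  have LA: "(\<lambda>N. 2 * (\<Sum>k\<in>{1..N}. (real N - real k) * hA \<theta> k) / real N) \<longlonglongrightarrow>
      2 * (1/2 * (pi\<^sup>2 / 6) + 1/2 * (pi\<^sup>2 / 6 - pi * (2 * \<theta>) / 2 + (2 * \<theta>)\<^sup>2 / 4))"
    by (rule avg_limit[OF _ _ hA_le hA_sums[OF assms]]) (simp_all add: hA_def)
  then have "(\<lambda>N. - (2 * (\<Sum>k\<in>{1..N}. (real N - real k) * hA \<theta> k) / real N)) \<longlonglongrightarrow>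
      - (2 * (1/2 * (pi\<^sup>2 / 6) + 1/2 * (pi\<^sup>2 / 6 - pi * (2 * \<theta>) / 2 + (2 * \<theta>)\<^sup>2 / 4)))"
    by (rule tendsto_minus)
  moreover have "- (2 * (1/2 * (pi\<^sup>2 / 6) + 1/2 * (pi\<^sup>2 / 6 - pi * (2 * \<theta>) / 2 + (2 * \<theta>)\<^sup>2 / 4)))
      = - (pi\<^sup>2 / 3 + \<theta>\<^sup>2 - pi * \<theta>)"
    by (simp add: power2_eq_square field_simps)
  ultimately show "(\<lambda>N. trace_sq (A_entry \<theta>) N / real N) \<longlonglongrightarrow> - (pi\<^sup>2 / 3 + \<theta>\<^sup>2 - pi * \<theta>)"
    unfolding trace_A by simp
next
  have LB: "(\<lambda>N. 2 * (\<Sum>k\<in>{1..N}. (real N - real k) * hB \<theta> k) / real N) \<longlonglongrightarrow>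
      2 * (1/2 * (pi\<^sup>2 / 6) - 1/2 * (pi\<^sup>2 / 6 - pi * (2 * \<theta>) / 2 + (2 * \<theta>)\<^sup>2 / 4))"
    by (rule avg_limit[OF _ _ hB_le hB_sums[OF assms]]) (simp_all add: hB_def)
  then have "(\<lambda>N. \<theta>\<^sup>2 + 2 * (\<Sum>k\<in>{1..N}. (real N - real k) * hB \<theta> k) / real N) \<longlonglongrightarrow>
      \<theta>\<^sup>2 + 2 * (1/2 * (pi\<^sup>2 / 6) - 1/2 * (pi\<^sup>2 / 6 - pi * (2 * \<theta>) / 2 + (2 * \<theta>)\<^sup>2 / 4))"
    by (intro tendsto_add tendsto_const)
  moreover have "\<theta>\<^sup>2 + 2 * (1/2 * (pi\<^sup>2 / 6) - 1/2 * (pi\<^sup>2 / 6 - pi * (2 * \<theta>) / 2 + (2 * \<theta>)\<^sup>2 / 4))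
      = pi * \<theta>"
    by (simp add: power2_eq_square field_simps)
  moreover have "\<forall>\<^sub>F N in sequentially. \<theta>\<^sup>2 + 2 * (\<Sum>k\<in>{1..N}. (real N - real k) * hB \<theta> k) / real N
      = trace_sq (B_entry \<theta>) N / real N"
    by (rule eventually_mono[OF eventually_ge_at_top[of "1::nat"]]) (simp add: trace_B field_simps)
  ultimately show "(\<lambda>N. trace_sq (B_entry \<theta>) N / real N) \<longlonglongrightarrow> pi * \<theta>"
    using Lim_transform_eventually by fastforce
qed

end
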